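(* For every integer $q\ge 11$ there exists an $\mathcal{SOS}_q(2)$ $U^*$ with $w_q(U^* )$ coprime to $q$ and of period $\frac{(q-2)(q-4)}{2}-3$ if $q\equiv 0\pmod 4$, $\frac{(q-1)(q-5)}{2}-3$ if $q\equiv 1\pmod 4$, $\frac{(q-2)(q-6)}{2}-3$ if $q\equiv 2\pmod 4$, and $\frac{(q-1)(q-3)}{2}-3$ if $q\equiv 3\pmod 4$.
   Context: For a periodic sequence $S=(s_i)$ over $\mathbb{Z}_q$ write $\mathbf{s}_n(i)=(s_i,\ldots,s_{i+n-1})$; $\mathbf{u}^R$ denotes the reverse of a tuple and $-\mathbf{u}$ its termwise negative. An $\mathcal{SOS}_q(n)$ is a periodic sequence of period $m$ over $\mathbb{Z}_q$ such that $\mathbf{s}_n(i)=\mathbf{s}_n(j)$ implies $i\equiv j\pmod m$, and $\mathbf{s}_n(i)\neq\mathbf{s}_n(j)^R$ and $\mathbf{s}_n(i)\neq-\mathbf{s}_n(j)^R$ for all $i,j$. The weight $w(S)$ is $s_0+\cdots+s_{m-1}$ computed in the integers with each term in $\{0,\ldots,q-1\}$, and $w_q(S)=w(S)\bmod q$. *)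

theory Defs
  imports Main
begin

definition window :: "(nat \<Rightarrow> nat) \<Rightarrow> nat \<Rightarrow> nat \<Rightarrow> nat list" where
  "window s n i = map (\<lambda>k. s (i + k)) [0..<n]"

definition negq :: "nat \<Rightarrow> nat list \<Rightarrow> nat list" where
  "negq q u = map (\<lambda>x. (q - x) mod q) u"

definition is_SOS :: "nat \<Rightarrow> nat \<Rightarrow> nat \<Rightarrow> (nat \<Rightarrow> nat) \<Rightarrow> bool" where
  "is_SOS q n m s \<longleftrightarrow>
     0 < m \<and> (\<forall>i. s i < q) \<and> (\<forall>i. s (i + m) = s i) \<and>
     (\<forall>i j. window s n i = window s n j \<longrightarrow> i mod m = j mod m) \<and>
     (\<forall>i j. window s n i \<noteq> rev (window s n j)) \<and>
     (\<forall>i j. window s n i \<noteq> negq q (rev (window s n j)))"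

definition weight :: "nat \<Rightarrow> (nat \<Rightarrow> nat) \<Rightarrow> nat" where
  "weight m s = (\<Sum>i<m. s i)"

definition weight_q :: "nat \<Rightarrow> nat \<Rightarrow> (nat \<Rightarrow> nat) \<Rightarrow> nat" where
  "weight_q q m s = weight m s mod q"

definition target_period :: "nat \<Rightarrow> nat" where
  "target_period q =
     (if q mod 4 = 0 then (q - 2) * (q - 4) div 2 - 3
      else if q mod 4 = 1 then (q - 1) * (q - 5) div 2 - 3
      else if q mod 4 = 2 then (q - 2) * (q - 6) div 2 - 3
      else (q - 1) * (q - 3) div 2 - 3)"

end

theory Submission
  imports Defs
begin

definition eto :: "int \<Rightarrow> int list \<Rightarrow> (int \<times> int) list" where
  "eto y xs = zip xs (tl xs @ [y])"

lemma eto_Nil[simp]: "eto y [] = []"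
  by (simp add: eto_def)

lemma eto_single[simp]: "eto y [x] = [(x, y)]"
  by (simp add: eto_def)

lemma eto_Cons: "eto y (x # xs) = (x, hd (xs @ [y])) # eto y xs"
  by (cases xs) (simp_all add: eto_def)

lemma eto_append: "ys \<noteq> [] \<Longrightarrow> eto y (xs @ ys) = eto (hd ys) xs @ eto y ys"
proof (induction xs)
  case Nil then show ?case by simp
next
  case (Cons x xs)
  then show ?case by (cases xs) (simp_all add: eto_Cons)
qed

lemma hd_concat_app:
  "(\<forall>b\<in>set bs. b \<noteq> [] \<and> hd b = x) \<Longrightarrow> hd (concat bs @ [x]) = x"
  by (cases bs) auto

lemma eto_concat:
  "(\<forall>b\<in>set bs. b \<noteq> [] \<and> hd b = x) \<Longrightarrow> eto x (concat bs) = concat (map (eto x) bs)"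
proof (induction bs)
  case Nil then show ?case by simp
next
  case (Cons b bs)
  show ?case
  proof (cases "concat bs = []")
    case True
    then show ?thesis using Cons by simp
  next
    case False
    then obtain c cs where "bs = c # cs" by (cases bs) auto
    then have "hd (concat bs) = x" using Cons.prems False
      by (cases c) auto
    then show ?thesis using Cons False by (simp add: eto_append)
  qed
qed

lemma nth_eto:
  assumes "p < length xs" "xs \<noteq> []"
  shows "eto (hd xs) xs ! p = (xs ! p, xs ! ((p + 1) mod length xs))"
proof (cases "p + 1 < length xs")
  case True
  then have "p < length xs - 1" by simp
  then show ?thesis using assms True by (simp add: eto_def nth_append nth_tl)
next
  case False
  then have "p + 1 = length xs" using assms by simp
  then have "\<not> p < length xs - 1" "Suc p mod length xs = 0" by simp_all
  then show ?thesis using assms by (simp add: eto_def nth_append hd_conv_nth)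
qed

lemma distinct_concat_lab:
  "distinct xs \<Longrightarrow> (\<And>x. x \<in> set xs \<Longrightarrow> distinct (f x)) \<Longrightarrow>
   (\<And>x e. x \<in> set xs \<Longrightarrow> e \<in> set (f x) \<Longrightarrow> lab e = x) \<Longrightarrow>
   distinct (concat (map f xs))"
proof (induction xs)
  case Nil then show ?case by simp
next
  case (Cons a xs)
  have d: "set (f a) \<inter> set (concat (map f xs)) = {}"
  proof (rule ccontr)
    assume "set (f a) \<inter> set (concat (map f xs)) \<noteq> {}"
    then obtain e x where "e \<in> set (f a)" "x \<in> set xs" "e \<in> set (f x)" by auto
    then have "lab e = a" "lab e = x" using Cons.prems by auto
    then show False using \<open>x \<in> set xs\<close> Cons.prems(1) by auto
  qed
  have "distinct (concat (map f xs))" using Cons by simp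
  then show ?case using d Cons.prems by simp
qed

definition blk :: "int \<Rightarrow> int \<Rightarrow> int list" where
  "blk i j = (if i = 1 \<and> j = 3 then [1,3,-1,-2,0] else [i,j,-i,-j])"

definition js :: "int \<Rightarrow> int \<Rightarrow> int list" where
  "js k i = (if i = 1 then [3..k-1] else [i+1..k-1])"

definition grp :: "int \<Rightarrow> int \<Rightarrow> int list" where
  "grp k i = [k, -i, -k] @ concat (map (blk i) (js k i)) @ [i]"

definition gs :: "int \<Rightarrow> int list" where
  "gs k = filter (\<lambda>i. \<not> (even k \<and> i = k div 2)) [1..k-1]"

definition Lseq :: "int \<Rightarrow> int list" where
  "Lseq k = concat (map (grp k) (gs k))"

definition ori :: "int \<times> int \<Rightarrow> bool" where
  "ori e = (let a = fst e; b = snd e in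
     (a = 0 \<and> \<bar>b\<bar> = 1) \<or> (b = 0 \<and> \<bar>a\<bar> = 2) \<or>
     (a \<noteq> 0 \<and> b \<noteq> 0 \<and> \<bar>a\<bar> \<noteq> \<bar>b\<bar> \<and> ((a > 0) = (b > 0) \<longrightarrow> \<bar>a\<bar> < \<bar>b\<bar>) \<and>
        ((a > 0) \<noteq> (b > 0) \<longrightarrow> \<bar>a\<bar> > \<bar>b\<bar>)))"

lemma ori_swap: "ori (a, b) \<Longrightarrow> \<not> ori (b, a)"
  unfolding ori_def Let_def by auto

lemma ori_negswap: "ori (a, b) \<Longrightarrow> \<not> ori (-b, -a)"
  unfolding ori_def Let_def by auto

lemma eto_blk: "eto i (blk i j) = (if i = 1 \<and> j = 3 then [(1,3),(3,-1),(-1,-2),(-2,0),(0,1)]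
   else [(i,j),(j,-i),(-i,-j),(-j,i)])"
  by (simp add: blk_def eto_def)

lemma hd_blk: "blk i j \<noteq> [] \<and> hd (blk i j) = i"
  by (simp add: blk_def)

lemma eto_grp: "eto k (grp k i) = [(k,-i),(-i,-k),(-k,i)] @ concat (map (\<lambda>j. eto i (blk i j)) (js k i)) @ [(i,k)]"
proof -
  have h: "\<forall>b\<in>set (map (blk i) (js k i)). b \<noteq> [] \<and> hd b = i" using hd_blk by auto
  have "eto k (grp k i) = eto i [k, -i, -k] @ eto k (concat (map (blk i) (js k i)) @ [i])"
    unfolding grp_def using eto_append[of "concat (map (blk i) (js k i)) @ [i]" k "[k,-i,-k]"]
      hd_concat_app[OF h] by simp
  also have "eto k (concat (map (blk i) (js k i)) @ [i]) = eto i (concat (map (blk i) (js k i))) @ [(i,k)]"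
    by (simp add: eto_append)
  also have "eto i (concat (map (blk i) (js k i))) = concat (map (\<lambda>j. eto i (blk i j)) (js k i))"
    using eto_concat[OF h] by (simp add: comp_def)
  finally show ?thesis by (simp add: eto_def)
qed

lemma eto_L: "eto k (Lseq k) = concat (map (\<lambda>i. eto k (grp k i)) (gs k))"
  unfolding Lseq_def using eto_concat[of "map (grp k) (gs k)" k]
  by (simp add: grp_def comp_def)

lemma set_js: "j \<in> set (js k i) \<Longrightarrow> (i = 1 \<longrightarrow> 3 \<le> j) \<and> (i \<noteq> 1 \<longrightarrow> i + 1 \<le> j) \<and> j \<le> k - 1"
  by (auto simp: js_def split: if_splits)

lemma set_gs: "i \<in> set (gs k) \<Longrightarrow> 1 \<le> i \<and> i \<le> k - 1"
  by (auto simp: gs_def)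

definition good :: "int \<Rightarrow> int \<times> int \<Rightarrow> bool" where
  "good k e = (ori e \<and> \<bar>fst e\<bar> \<le> k \<and> \<bar>snd e\<bar> \<le> k)"

lemma good4:
  assumes "0 < i" "i < j" "j \<le> k"
  shows "good k (i,j)" "good k (j,-i)" "good k (-i,-j)" "good k (-j,i)"
  using assms by (simp_all add: good_def ori_def Let_def)

lemma good_blk:
  assumes "1 \<le> i" "j \<in> set (js k i)" "e \<in> set (eto i (blk i j))"
  shows "good k e"
proof -
  have j: "(i = 1 \<longrightarrow> 3 \<le> j) \<and> (i \<noteq> 1 \<longrightarrow> i + 1 \<le> j) \<and> j \<le> k - 1" using set_js[OF assms(2)] .
  show ?thesis
  proof (cases "i = 1 \<and> j = 3")
    case True
    then have "e \<in> set [(1,3),(3,-1),(-1,-2),(-2,0),(0,1)]" "3 < k" using assms j by (auto simp: eto_blk)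
    then show ?thesis by (auto simp: good_def ori_def Let_def)
  next
    case False
    have "eto i (blk i j) = [(i,j),(j,-i),(-i,-j),(-j,i)]" using False by (simp add: eto_blk)
    then have "e \<in> set [(i,j),(j,-i),(-i,-j),(-j,i)]" using assms(3) by simp
    moreover have "0 < i" "i < j" "j \<le> k" using assms j False by auto
    ultimately show ?thesis using good4 by auto
  qed
qed

lemma good_grp:
  assumes "i \<in> set (gs k)" "e \<in> set (eto k (grp k i))"
  shows "good k e"
proof -
  have i: "1 \<le> i" "i \<le> k - 1" using set_gs[OF assms(1)] by auto
  from assms(2) consider "e \<in> set [(k,-i),(-i,-k),(-k,i),(i,k)]"
    | j where "j \<in> set (js k i)" "e \<in> set (eto i (blk i j))"
    unfolding eto_grp by auto
  then show ?thesis
  proof cases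
    case 1
    have "0 < i" "i < k" "k \<le> k" using i by auto
    then show ?thesis using 1 good4[of i k k] by auto
  next
    case 2 then show ?thesis using good_blk i by blast
  qed
qed

lemma good_L: "e \<in> set (eto k (Lseq k)) \<Longrightarrow> good k e"
proof -
  assume "e \<in> set (eto k (Lseq k))"
  then obtain i where "i \<in> set (gs k)" "e \<in> set (eto k (grp k i))" unfolding eto_L by auto
  then show ?thesis by (rule good_grp)
qed

definition lab2 :: "int \<times> int \<Rightarrow> int" where
  "lab2 e = max 3 (max \<bar>fst e\<bar> \<bar>snd e\<bar>)"

definition lab1 :: "int \<times> int \<Rightarrow> int" where
  "lab1 e = (if fst e = 0 \<or> snd e = 0 then 1 else min \<bar>fst e\<bar> \<bar>snd e\<bar>)"

lemma blk_props0:
  assumes "1 \<le> i" "j \<in> set (js k i)"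
  shows "(distinct (eto i (blk i j)) \<and> (\<forall>e \<in> set (eto i (blk i j)). lab2 e = j \<and> lab1 e = i))"
proof (cases "i = 1 \<and> j = 3")
  case True
  then show ?thesis by (simp add: eto_blk lab1_def lab2_def)
next
  case F: False
  have j: "(i = 1 \<longrightarrow> 3 \<le> j) \<and> (i \<noteq> 1 \<longrightarrow> i + 1 \<le> j) \<and> j \<le> k - 1" using set_js[OF assms(2)] .
  have ij: "i < j" "0 < i" "3 \<le> j" using j assms(1) F by auto
  have e: "eto i (blk i j) = [(i,j),(j,-i),(-i,-j),(-j,i)]" using F by (simp add: eto_blk)
  have d: "distinct [(i,j),(j,-i),(-i,-j),(-j,i)]" using ij by auto
  have l: "lab2 (i,j) = j" "lab2 (j,-i) = j" "lab2 (-i,-j) = j" "lab2 (-j,i) = j"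
    using ij by (simp_all add: lab2_def)
  have m: "lab1 (i,j) = i" "lab1 (j,-i) = i" "lab1 (-i,-j) = i" "lab1 (-j,i) = i"
    using ij by (simp_all add: lab1_def)
  show ?thesis unfolding e by (rule conjI[OF d]) (simp only: list.set ball_simps l m simp_thms)
qed

lemma blk_props:
  assumes "1 \<le> i" "j \<in> set (js k i)"
  shows "distinct (eto i (blk i j))" "\<And>e. e \<in> set (eto i (blk i j)) \<Longrightarrow> lab2 e = j"
    "\<And>e. e \<in> set (eto i (blk i j)) \<Longrightarrow> lab1 e = i"
  using blk_props0[OF assms] by blast+

lemma grp_props:
  assumes "i \<in> set (gs k)" "5 \<le> k"
  shows "distinct (eto k (grp k i))" "\<And>e. e \<in> set (eto k (grp k i)) \<Longrightarrow> lab1 e = i"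
proof -
  have i: "1 \<le> i" "i \<le> k - 1" using set_gs[OF assms(1)] by auto
  let ?M = "concat (map (\<lambda>j. eto i (blk i j)) (js k i))"
  have dm: "distinct ?M"
    apply (rule distinct_concat_lab[where lab = lab2])
    apply (simp add: js_def)
    apply (erule blk_props(1)[OF i(1)])
    apply (erule blk_props(2)[OF i(1)], assumption)
    done
  have lm: "lab2 e < k" if "e \<in> set ?M" for e
  proof -
    from that obtain j where j: "j \<in> set (js k i)" "e \<in> set (eto i (blk i j))" by auto
    then have "lab2 e = j" by (rule blk_props(2)[OF i(1)])
    moreover have "j \<le> k - 1" using set_js[OF j(1)] by blast
    ultimately show ?thesis by simp
  qed
  have l: "lab2 (k,-i) = k" "lab2 (-i,-k) = k" "lab2 (-k,i) = k" "lab2 (i,k) = k"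
    using i assms(2) by (simp_all add: lab2_def)
  have m: "lab1 (k,-i) = i" "lab1 (-i,-k) = i" "lab1 (-k,i) = i" "lab1 (i,k) = i"
    using i assms(2) by (simp_all add: lab1_def)
  have dpp: "distinct [(k,-i),(-i,-k),(-k,i),(i,k)]" using i by auto
  have nm: "x \<notin> set ?M" if "x \<in> set [(k,-i),(-i,-k),(-k,i),(i,k)]" for x
  proof
    assume "x \<in> set ?M"
    then have "lab2 x < k" by (rule lm)
    moreover have "lab2 x = k" using that l by auto
    ultimately show False by simp
  qed
  have n4: "(k,-i) \<notin> set ?M" "(-i,-k) \<notin> set ?M" "(-k,i) \<notin> set ?M" "(i,k) \<notin> set ?M"
    by (rule nm, simp)+
  have d3: "distinct [(k,-i),(-i,-k),(-k,i)]" "(i,k) \<notin> set [(k,-i),(-i,-k),(-k,i)]"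
    using i by auto
  have "distinct ([(k,-i),(-i,-k),(-k,i)] @ ?M @ [(i,k)])"
  proof -
    have ne: "(k,-i) \<noteq> (i,k)" "(-i,-k) \<noteq> (i,k)" "(-k,i) \<noteq> (i,k)" using d3(2) by auto
    show ?thesis
    using d3 dm n4 ne by (simp only: distinct_append set_append list.set distinct.simps Int_insert_left Int_insert_right
       Un_iff insert_iff empty_iff Int_empty_left Int_empty_right simp_thms if_False if_True)
  qed
  then show "distinct (eto k (grp k i))" unfolding eto_grp .
  show "\<And>e. e \<in> set (eto k (grp k i)) \<Longrightarrow> lab1 e = i"
  proof -
    fix e assume "e \<in> set (eto k (grp k i))"
    then consider "e \<in> set [(k,-i),(-i,-k),(-k,i),(i,k)]" | "e \<in> set ?M"
      unfolding eto_grp set_append list.set Un_iff insert_iff by blast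
    then show "lab1 e = i"
    proof cases
      case 1 then show ?thesis using m unfolding list.set insert_iff empty_iff by blast
    next
      case 2
      then obtain j where j: "j \<in> set (js k i)" "e \<in> set (eto i (blk i j))" by auto
      then show ?thesis by (rule blk_props(3)[OF i(1)])
    qed
  qed
qed

lemma distinct_L: "5 \<le> k \<Longrightarrow> distinct (eto k (Lseq k))"
  unfolding eto_L
  apply (rule distinct_concat_lab[where lab = lab1])
  apply (simp add: gs_def)
  apply (erule grp_props(1), assumption)
  apply (erule grp_props(2), assumption+)
  done


lemma len_blks: "(\<forall>j\<in>set xs. \<not> (i = 1 \<and> j = 3)) \<Longrightarrow> length (concat (map (blk i) xs)) = 4 * length xs"
  by (induction xs) (auto simp: blk_def)

lemma sum_blks: "(\<forall>j\<in>set xs. \<not> (i = 1 \<and> j = 3)) \<Longrightarrow> sum_list (concat (map (blk i) xs)) = 0"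
  by (induction xs) (auto simp: blk_def)

lemma len_grp: assumes "2 \<le> i" "i \<le> k - 1"
  shows "int (length (grp k i)) = 4*(k-i)" "sum_list (grp k i) = 0"
proof -
  have js: "js k i = [i+1..k-1]" using assms by (simp add: js_def)
  have nn: "\<forall>j\<in>set (js k i). \<not> (i = 1 \<and> j = 3)" using assms by auto
  show "int (length (grp k i)) = 4*(k-i)"
    unfolding grp_def using len_blks[OF nn] assms by (simp add: js)
  show "sum_list (grp k i) = 0"
    unfolding grp_def using sum_blks[OF nn] by simp
qed

lemma len_grp1: assumes "4 \<le> k"
  shows "int (length (grp k 1)) = 4*(k-1) - 3" "sum_list (grp k 1) = 1"
proof -
  have js: "js k 1 = 3 # [4..k-1]" using assms by (simp add: js_def upto_rec1)
  have nn: "\<forall>j\<in>set [4..k-1]. \<not> ((1::int) = 1 \<and> j = 3)" by auto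
  show "int (length (grp k 1)) = 4*(k-1) - 3"
    unfolding grp_def using len_blks[OF nn] assms by (simp add: js blk_def)
  show "sum_list (grp k 1) = 1"
    unfolding grp_def using sum_blks[OF nn] by (simp add: js blk_def)
qed

lemma sum4: "0 \<le> n \<Longrightarrow> sum_list (map (\<lambda>i. 4*(c-i)) [2..n+1]) = 4*n*c - 2*n*(n+3)"
proof (induction n rule: int_ge_induct)
  case base then show ?case by simp
next
  case (step n)
  have "[2..n+1+1] = [2..n+1] @ [n+1+1]" using step.hyps upto_rec2[of 2 "n+1+1"] by (simp add: add.commute)
  then show ?case using step.IH by (simp add: algebra_simps)
qed

lemma sum_filter_ne: "distinct xs \<Longrightarrow> d \<in> set xs \<Longrightarrow>
  sum_list (map (f::_\<Rightarrow>int) (filter (\<lambda>i. i \<noteq> d) xs)) = sum_list (map f xs) - f d"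
proof (induction xs)
  case Nil then show ?case by simp
next
  case (Cons a xs)
  show ?case
  proof (cases "a = d")
    case True
    then have "d \<notin> set xs" using Cons.prems by simp
    then have "filter (\<lambda>i. i \<noteq> d) xs = xs" by (induction xs) auto
    then show ?thesis using True by simp
  next
    case False
    then show ?thesis using Cons by simp
  qed
qed

lemma int_length_concat: "int (length (concat (map f xs))) = sum_list (map (\<lambda>x. int (length (f x))) xs)"
  by (induction xs) auto

lemma sum_list_concat_map: "sum_list (concat (map f xs)) = sum_list (map (\<lambda>x. sum_list (f x)) xs)"
  by (induction xs) auto

lemma gs_split: assumes "5 \<le> k"
  shows "gs k = 1 # filter (\<lambda>i. \<not> (even k \<and> i = k div 2)) [2..k-1]"
proof -
  have "[1..k-1] = 1 # [2..k-1]" using assms by (simp add: upto_rec1)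
  moreover have "\<not> (even k \<and> (1::int) = k div 2)" using assms by auto
  ultimately show ?thesis unfolding gs_def by simp
qed

lemma len_L: assumes "5 \<le> k"
  shows "int (length (Lseq k)) = (if even k then 2*k*(k-2) - 3 else 2*k*(k-1) - 3)"
proof -
  let ?P = "\<lambda>i. \<not> (even k \<and> i = k div 2)"
  have m: "\<And>i. i \<in> set (filter ?P [2..k-1]) \<Longrightarrow> int (length (grp k i)) = 4*(k-i)"
    using len_grp(1) by auto
  have "int (length (Lseq k)) = sum_list (map (\<lambda>i. int (length (grp k i))) (gs k))"
    unfolding Lseq_def by (rule int_length_concat)
  also have "\<dots> = 4*(k-1) - 3 + sum_list (map (\<lambda>i. 4*(k-i)) (filter ?P [2..k-1]))"
  proof -
    have meq: "map (\<lambda>i. int (length (grp k i))) (filter ?P [2..k-1]) = map (\<lambda>i. 4*(k-i)) (filter ?P [2..k-1])"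
      by (rule map_cong[OF refl]) (rule m)
    have g1: "int (length (grp k 1)) = 4*(k-1) - 3" using len_grp1(1) assms by simp
    show ?thesis unfolding gs_split[OF assms] list.map sum_list.Cons meq g1 ..
  qed
  also have "\<dots> = (if even k then 2*k*(k-2) - 3 else 2*k*(k-1) - 3)"
  proof (cases "even k")
    case True
    have f: "filter ?P [2..k-1] = filter (\<lambda>i. i \<noteq> k div 2) [2..k-1]" using True by simp
    have d: "k div 2 \<in> set [2..k-1]" using assms True by auto
    have s: "sum_list (map (\<lambda>i. 4*(k-i)) [2..k-2+1]) = 4*(k-2)*k - 2*(k-2)*(k-2+3)"
      by (rule sum4) (use assms in simp)
    have kk: "4 * (k div 2) = 2 * k" using True by simp
    have s': "sum_list (map (\<lambda>i. 4*(k-i)) [2..k-1]) = 4*(k-2)*k - 2*(k-2)*(k-2+3)" using s by simp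
    have "4*(k-1) - 3 + (sum_list (map (\<lambda>i. 4*(k-i)) [2..k-1]) - 4*(k - k div 2)) = 2*k*(k-2) - 3"
      unfolding s' using kk by (simp add: algebra_simps)
    then show ?thesis unfolding f sum_filter_ne[OF distinct_upto d] using True by simp
  next
    case False
    have f: "filter ?P [2..k-1] = [2..k-1]" using False by simp
    have s: "sum_list (map (\<lambda>i. 4*(k-i)) [2..k-2+1]) = 4*(k-2)*k - 2*(k-2)*(k-2+3)"
      by (rule sum4) (use assms in simp)
    show ?thesis unfolding f using s False by (simp add: algebra_simps)
  qed
  finally show ?thesis .
qed

lemma sum_L: assumes "5 \<le> k" shows "sum_list (Lseq k) = 1"
proof -
  let ?P = "\<lambda>i. \<not> (even k \<and> i = k div 2)"
  have m: "\<And>i. i \<in> set (filter ?P [2..k-1]) \<Longrightarrow> sum_list (grp k i) = 0"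
    using len_grp(2) by auto
  have "sum_list (Lseq k) = sum_list (map (\<lambda>i. sum_list (grp k i)) (gs k))"
    unfolding Lseq_def by (rule sum_list_concat_map)
  also have "\<dots> = 1"
  proof -
    have meq: "map (\<lambda>i. sum_list (grp k i)) (filter ?P [2..k-1]) = map (\<lambda>i. 0) (filter ?P [2..k-1])"
      by (rule map_cong[OF refl]) (rule m)
    have g1: "sum_list (grp k 1) = 1" using len_grp1(2) assms by simp
    show ?thesis unfolding gs_split[OF assms] list.map sum_list.Cons meq g1 by simp
  qed
  finally show ?thesis .
qed

lemma hd_L: assumes "5 \<le> k" shows "Lseq k \<noteq> [] \<and> hd (Lseq k) = k"
  unfolding Lseq_def gs_split[OF assms] by (simp add: grp_def)

lemma tp: assumes "q \<ge> 11" "k = int ((q - 1) div 2)"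
  shows "int (target_period q) = (if even k then 2*k*(k-2) - 3 else 2*k*(k-1) - 3)"
proof -
  define t where "t = int (q div 4)"
  define r where "r = q mod 4"
  have q0: "q = 4 * (q div 4) + q mod 4" by simp
  have qt: "int q = 4*t + int r" unfolding t_def r_def
    by (metis q0 of_nat_add of_nat_mult of_nat_numeral)
  have r4: "r < 4" unfolding r_def by simp
  have t2: "t \<ge> 2" using qt assms(1) r4 by linarith
  have kk: "k = (int q - 1) div 2" using assms(1) assms(2) by (simp add: zdiv_int of_nat_diff)
  have A: "int ((q - a) * (q - b) div 2 - 3) = (int q - int a) * (int q - int b) div 2 - 3"
    if "a \<le> 6" "b \<le> 6" "a \<le> b" for a b
  proof -
    have "q - a \<ge> 5" using assms(1) that by linarith
    moreover have "(q - b) \<ge> 5" using assms(1) that by linarith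
    ultimately have "(q - a) * (q - b) \<ge> 5 * 5" by (rule mult_le_mono)
    then have "(q - a) * (q - b) div 2 \<ge> 3" by linarith
    then have "int ((q - a) * (q - b) div 2 - 3) = int ((q - a) * (q - b)) div 2 - 3"
      by (simp add: of_nat_diff zdiv_int)
    also have "int ((q - a) * (q - b)) = (int q - int a) * (int q - int b)"
      using that assms(1) by (simp add: of_nat_diff)
    finally show ?thesis .
  qed
  consider "r = 0" | "r = 1" | "r = 2" | "r = 3" using r4 by linarith
  then show ?thesis
  proof cases
    case 1
    then have k: "k = 2*t - 1" using kk qt by simp
    have e: "(4*t - 2) * (4*t - 4) = 2 * (2*k*(k-1))" unfolding k by (simp add: algebra_simps)
    have "int (target_period q) = (int q - 2) * (int q - 4) div 2 - 3"
      using A[of 2 4] 1 unfolding target_period_def r_def by simp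
    also have "\<dots> = 2*k*(k-1) - 3" using qt 1 e by simp
    finally show ?thesis using k by simp
  next
    case 2
    then have k: "k = 2*t" using kk qt by simp
    have e: "(4*t) * (4*t - 4) = 2 * (2*k*(k-2))" unfolding k by (simp add: algebra_simps)
    have "int (target_period q) = (int q - 1) * (int q - 5) div 2 - 3"
      using A[of 1 5] 2 unfolding target_period_def r_def by simp
    also have "\<dots> = 2*k*(k-2) - 3" using qt 2 e by simp
    finally show ?thesis using k by simp
  next
    case 3
    then have k: "k = 2*t" using kk qt by simp
    have e: "(4*t) * (4*t - 4) = 2 * (2*k*(k-2))" unfolding k by (simp add: algebra_simps)
    have "int (target_period q) = (int q - 2) * (int q - 6) div 2 - 3"
      using A[of 2 6] 3 unfolding target_period_def r_def by simp
    also have "\<dots> = 2*k*(k-2) - 3" using qt 3 e by simp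
    finally show ?thesis using k by simp
  next
    case 4
    then have k: "k = 2*t + 1" using kk qt by simp
    have e: "(4*t + 2) * (4*t) = 2 * (2*k*(k-1))" unfolding k by (simp add: algebra_simps)
    have "int (target_period q) = (int q - 1) * (int q - 3) div 2 - 3"
      using A[of 1 3] 4 unfolding target_period_def r_def by simp
    also have "\<dots> = 2*k*(k-1) - 3" using qt 4 e by (simp add: algebra_simps)
    finally show ?thesis using k by simp
  qed
qed

theorem corollary3p25:
  fixes q :: nat
  assumes "q \<ge> 11"
  shows "\<exists>s. is_SOS q 2 (target_period q) s \<and>
             coprime (weight_q q (target_period q) s) q"
proof -
  define k where "k = int ((q - 1) div 2)"
  have k5n: "5 \<le> (q - 1) div 2" using assms by linarith
  have k2n: "2 * ((q - 1) div 2) < q" using assms by linarith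
  have k5: "5 \<le> k" unfolding k_def using k5n by linarith
  have kq: "2 * k < int q" unfolding k_def using k2n by linarith
  define L where "L = Lseq k"
  define m where "m = length L"
  have Lne: "L \<noteq> []" and hdL: "hd L = k" using hd_L[OF k5] unfolding L_def by auto
  have mt: "m = target_period q"
  proof -
    have "int m = int (target_period q)"
      unfolding m_def L_def len_L[OF k5] tp[OF assms k_def] ..
    then show ?thesis by simp
  qed
  have m0: "0 < m" unfolding m_def using Lne by simp
  define Q where "Q = eto k L"
  have Qd: "distinct Q" unfolding Q_def L_def using distinct_L[OF k5] .
  have Qg: "\<And>e. e \<in> set Q \<Longrightarrow> good k e" unfolding Q_def L_def using good_L by blast
  have lQ: "length Q = m" unfolding Q_def m_def by (simp add: eto_def)
  have nQ: "Q ! p = (L ! p, L ! ((p + 1) mod m))" if "p < m" for p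
    unfolding Q_def m_def using nth_eto[of p L] that Lne hdL unfolding m_def by simp
  define enc where "enc a = nat (a mod int q)" for a
  define s where "s n = enc (L ! (n mod m))" for n
  have q0: "0 < int q" using assms by simp
  have enc_inj: "a = b" if "\<bar>a\<bar> \<le> k" "\<bar>b\<bar> \<le> k" "enc a = enc b" for a b
  proof -
    have "a mod int q = b mod int q" using that(3) q0 unfolding enc_def
      by (simp add: nat_eq_iff2)
    then have "int q dvd a - b" by (simp add: mod_eq_dvd_iff)
    moreover have "\<bar>a - b\<bar> < int q" using that kq by linarith
    ultimately show ?thesis
      using dvd_imp_le_int[of "a - b" "int q"] by (cases "a - b = 0") auto
  qed
  have enc_neg: "(q - enc a) mod q = enc (- a)" for a
  proof -
    have lt: "enc a < q" unfolding enc_def using q0 by (simp add: nat_less_iff)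
    have "int ((q - enc a) mod q) = (int q - int (enc a)) mod int q"
      using lt by (simp add: zmod_int of_nat_diff)
    also have "int (enc a) = a mod int q" unfolding enc_def using q0 by simp
    also have "(int q - a mod int q) mod int q = (- a) mod int q"
      by (simp add: mod_minus_eq)
    also have "\<dots> = int (enc (- a))" unfolding enc_def using q0 by simp
    finally show ?thesis by simp
  qed
  define e where "e n = Q ! (n mod m)" for n
  have eQ: "e n \<in> set Q" for n unfolding e_def using lQ m0 by simp
  have win: "window s 2 n = [enc (fst (e n)), enc (snd (e n))]" for n
  proof -
    have "(n + 1) mod m = (n mod m + 1) mod m" by (simp add: mod_Suc_eq)
    then show ?thesis unfolding window_def s_def e_def using nQ[of "n mod m"] m0
      by (simp add: numeral_2_eq_2)
  qed
  have gb: "\<bar>fst (e n)\<bar> \<le> k" "\<bar>snd (e n)\<bar> \<le> k" "ori (e n)" for n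
    using Qg[OF eQ[of n]] unfolding good_def by auto
  have sos: "is_SOS q 2 m s"
    unfolding is_SOS_def
  proof (intro conjI allI impI)
    show "0 < m" by (rule m0)
    show "s i < q" for i unfolding s_def enc_def using q0 by (simp add: nat_less_iff)
    show "s (i + m) = s i" for i unfolding s_def by simp
    show "i mod m = j mod m" if "window s 2 i = window s 2 j" for i j
    proof -
      have "enc (fst (e i)) = enc (fst (e j))" "enc (snd (e i)) = enc (snd (e j))"
        using that unfolding win by auto
      then have "fst (e i) = fst (e j)" "snd (e i) = snd (e j)" using enc_inj gb by blast+
      then have "e i = e j" by (simp add: prod_eq_iff)
      then show ?thesis unfolding e_def using Qd lQ m0 by (simp add: nth_eq_iff_index_eq)
    qed
    show "window s 2 i \<noteq> rev (window s 2 j)" for i j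
    proof
      assume "window s 2 i = rev (window s 2 j)"
      then have "enc (fst (e i)) = enc (snd (e j))" "enc (snd (e i)) = enc (fst (e j))"
        unfolding win by auto
      then have "fst (e i) = snd (e j)" "snd (e i) = fst (e j)" using enc_inj gb by blast+
      then have "ori (snd (e j), fst (e j))" using gb(3)[of i] by (metis prod.collapse)
      moreover have "ori (fst (e j), snd (e j))" using gb(3)[of j] by simp
      ultimately show False using ori_swap by blast
    qed
    show "window s 2 i \<noteq> negq q (rev (window s 2 j))" for i j
    proof
      assume "window s 2 i = negq q (rev (window s 2 j))"
      then have "enc (fst (e i)) = enc (- snd (e j))" "enc (snd (e i)) = enc (- fst (e j))"
        unfolding win negq_def by (auto simp: enc_neg)
      moreover have "\<bar>- snd (e j)\<bar> \<le> k" "\<bar>- fst (e j)\<bar> \<le> k" using gb by auto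
      ultimately have "fst (e i) = - snd (e j)" "snd (e i) = - fst (e j)" using enc_inj gb by blast+
      then have "ori (- snd (e j), - fst (e j))" using gb(3)[of i] by (metis prod.collapse)
      moreover have "ori (fst (e j), snd (e j))" using gb(3)[of j] by simp
      ultimately show False using ori_negswap by blast
    qed
  qed
  have wt: "weight m s mod q = 1"
  proof -
    have "int (weight m s) = (\<Sum>i<m. L ! i mod int q)"
      unfolding weight_def s_def enc_def using q0 by simp
    then have "int (weight m s) mod int q = (\<Sum>i<m. L ! i) mod int q"
      by (simp add: mod_sum_eq)
    also have "(\<Sum>i<m. L ! i) = sum_list L"
      unfolding m_def by (simp add: sum_list_sum_nth atLeast0LessThan)
    also have "sum_list L = 1" unfolding L_def by (rule sum_L[OF k5])
    finally have "int (weight m s) mod int q = 1" using assms by simp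
    then show ?thesis by (simp add: zmod_int[symmetric])
  qed
  show ?thesis
    using sos wt unfolding mt[symmetric] weight_q_def by auto
qed

end
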